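(* Let $q$ be the semi-Markov kernel of a homogeneous $d$-dimensional multi-time Markov renewal chain (so in particular $q(0_d)=O_s$). Then $\mathbbm{I}_s-q$ has a convolutional inverse, given by $$u:=(\mathbbm{I}_s-q)^{(-1)}=\sum_{n\ge0}q^{(n)}.$$
   Context: $E=\{1,\dots,s\}$; $\mathcal{M}_s(\mathbb{N}^d)$ is the set of functions $\mathbb{N}^d\to\mathbb{R}^{s\times s}$, with convolution $[A*B](k)=\sum_{l+l'=k}A(l)B(l')$, identity $\mathbbm{I}_s$ ($\mathbbm{I}_s(0_d)=I_s$, zero elsewhere), powers $A^{(0)}=\mathbbm{I}_s$, $A^{(n)}=A*A^{(n-1)}$, and convolutional inverse $A^{(-1)}$ with $A*A^{(-1)}=A^{(-1)}*A=\mathbbm{I}_s$. A homogeneous $d$-dimensional multi-time Markov renewal chain is a process $(J_n,S_n)_{n\in\mathbb{N}}$, $J_n\in E$, $S_n\in\mathbb{N}^d$, $S_0=0_d$, $S_n<S_{n+1}$ (componentwise $\le$ and not equal), such that a.s. $\mathbb{P}(J_{n+1}=j,S_{n+1}-S_n=k\mid J_{0:n},S_{0:n})=q_{J_nj}(k)$ with $q_{ij}(k)=\mathbb{P}(J_{n+1}=j,S_{n+1}-S_n=k\mid J_n=i)$ independent of $n$; $q\in\mathcal{M}_s(\mathbb{N}^d)$ is its semi-Markov kernel. The series is pointwise and finite at each point. *)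

theory Defs
  imports "HOL-Probability.Probability"
begin

text \<open>Time points in \<open>\<nat>^d\<close> are \<open>nat ^ 'd\<close>; the state space \<open>E\<close> is a finite type \<open>'s\<close>;
  elements of \<open>\<M>_s(\<nat>^d)\<close> are functions \<open>nat ^ 'd \<Rightarrow> real ^ 's ^ 's\<close>.\<close>

definition vle :: "nat ^ 'd \<Rightarrow> nat ^ 'd \<Rightarrow> bool" where
  "vle k l \<longleftrightarrow> (\<forall>i. k $ i \<le> l $ i)"

definition vless :: "nat ^ 'd \<Rightarrow> nat ^ 'd \<Rightarrow> bool" where
  "vless k l \<longleftrightarrow> vle k l \<and> k \<noteq> l"

definition mconv :: "(nat ^ 'd \<Rightarrow> real ^ 's ^ 's) \<Rightarrow> (nat ^ 'd \<Rightarrow> real ^ 's ^ 's)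
    \<Rightarrow> (nat ^ 'd \<Rightarrow> real ^ 's ^ 's)" where
  "mconv A B k = (\<Sum>p\<in>{(l, l'). l + l' = k}. A (fst p) ** B (snd p))"

definition mid :: "nat ^ 'd \<Rightarrow> real ^ 's ^ 's" where
  "mid k = (if k = 0 then mat 1 else 0)"

fun mpow :: "(nat ^ 'd \<Rightarrow> real ^ 's ^ 's) \<Rightarrow> nat \<Rightarrow> (nat ^ 'd \<Rightarrow> real ^ 's ^ 's)" where
  "mpow A 0 = mid"
| "mpow A (Suc n) = mconv A (mpow A n)"

text \<open>Homogeneous d-dimensional multi-time Markov renewal chain \<open>(J_n,S_n)\<close> on the probability
  space \<open>M\<close> with semi-Markov kernel \<open>q\<close>: \<open>q k $ i $ j = q_{ij}(k)\<close>. Since all variables are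
  discrete, the a.s. conditional-probability identity is stated on cylinder events.\<close>

definition mtmrc :: "'a measure \<Rightarrow> (nat \<Rightarrow> 'a \<Rightarrow> 's::finite) \<Rightarrow> (nat \<Rightarrow> 'a \<Rightarrow> nat ^ 'd)
    \<Rightarrow> (nat ^ 'd \<Rightarrow> real ^ 's ^ 's) \<Rightarrow> bool" where
  "mtmrc M J S q \<longleftrightarrow>
     prob_space M \<and>
     (\<forall>n. J n \<in> measurable M (count_space UNIV)) \<and>
     (\<forall>n. S n \<in> measurable M (count_space UNIV)) \<and>
     (AE x in M. S 0 x = 0) \<and>
     (\<forall>n. AE x in M. vless (S n x) (S (Suc n) x)) \<and>
     (\<forall>n (jj :: nat \<Rightarrow> 's) (ss :: nat \<Rightarrow> nat ^ 'd) j k.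
        measure M {x \<in> space M. (\<forall>m\<le>n. J m x = jj m \<and> S m x = ss m)
                                  \<and> J (Suc n) x = j \<and> S (Suc n) x = ss n + k}
        = q k $ jj n $ j * measure M {x \<in> space M. \<forall>m\<le>n. J m x = jj m \<and> S m x = ss m})"

end

theory Submission
  imports Defs
begin

lemma mm_radd: "((A::real^'n^'m) + B) ** C = A ** C + B ** C"
  by (vector matrix_matrix_mult_def sum.distrib[symmetric] field_simps)

lemma mm_rdiff: "((A::real^'n^'m) - B) ** C = A ** C - B ** C"
  by (vector matrix_matrix_mult_def sum_subtractf[symmetric] field_simps)

lemma mm_ldiff: "(C::real^'n^'m) ** (A - B) = C ** A - C ** B"
  by (vector matrix_matrix_mult_def sum_subtractf[symmetric] field_simps)

lemma mm_sum_right: "(A::real^'n^'m) ** sum f S = sum (\<lambda>x. A ** f x) S"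
  by (induction S rule: infinite_finite_induct) (simp_all add: matrix_add_ldistrib)

lemma mm_sum_left: "sum f S ** (A::real^'n^'m) = sum (\<lambda>x. f x ** A) S"
  by (induction S rule: infinite_finite_induct) (simp_all add: mm_radd)

lemma finite_le_vec: "finite {l::nat^'d. \<forall>i. l $ i \<le> k $ i}"
proof -
  have "{l::nat^'d. \<forall>i. l $ i \<le> k $ i} \<subseteq> vec_lambda ` (PiE UNIV (\<lambda>i. {..k$i}))"
  proof
    fix l :: "nat^'d" assume "l \<in> {l. \<forall>i. l $ i \<le> k $ i}"
    then have "(\<lambda>i. l $ i) \<in> PiE UNIV (\<lambda>i. {..k$i})" by auto
    then show "l \<in> vec_lambda ` (PiE UNIV (\<lambda>i. {..k$i}))"
      by (metis image_eqI vec_lambda_eta)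
  qed
  moreover have "finite (PiE (UNIV::'d set) (\<lambda>i. {..k$i}))" by (simp add: finite_PiE)
  ultimately show ?thesis by (meson finite_imageI finite_subset)
qed

lemma finite_P: "finite {(l, l'::nat^'d). l + l' = k}"
proof -
  let ?B = "{l::nat^'d. \<forall>i. l $ i \<le> k $ i}"
  have "{(l, l'::nat^'d). l + l' = k} \<subseteq> ?B \<times> ?B"
    by auto
  then show ?thesis by (rule finite_subset[OF _ finite_cartesian_product[OF finite_le_vec finite_le_vec]])
qed

lemma mconv_mid_left: "mconv mid B = B"
proof
  fix k
  have "mconv mid B k = (\<Sum>p\<in>{(l, l'). l + l' = k}. if p = (0, k) then B k else 0)"
    unfolding mconv_def by (rule sum.cong) (auto simp: mid_def)
  also have "\<dots> = B k" by (simp add: sum.delta[OF finite_P])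
  finally show "mconv mid B k = B k" .
qed

lemma mconv_mid_right: "mconv A mid = A"
proof
  fix k
  have "mconv A mid k = (\<Sum>p\<in>{(l, l'). l + l' = k}. if p = (k, 0) then A k else 0)"
    unfolding mconv_def by (rule sum.cong) (auto simp: mid_def)
  also have "\<dots> = A k" by (simp add: sum.delta[OF finite_P])
  finally show "mconv A mid k = A k" .
qed

lemma mconv_diff_left: "mconv (\<lambda>k. A k - B k) C k = mconv A C k - mconv B C k"
  unfolding mconv_def by (simp add: mm_rdiff sum_subtractf)

lemma mconv_diff_right: "mconv A (\<lambda>k. B k - C k) k = mconv A B k - mconv A C k"
  unfolding mconv_def by (simp add: mm_ldiff sum_subtractf)

lemma mconv_sum_right: "mconv A (\<lambda>k. sum (\<lambda>n. F n k) S) k = sum (\<lambda>n. mconv A (F n) k) S"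
  unfolding mconv_def by (simp add: mm_sum_right sum.swap[of _ S])

lemma mconv_sum_left: "mconv (\<lambda>k. sum (\<lambda>n. F n k) S) A k = sum (\<lambda>n. mconv (F n) A k) S"
  unfolding mconv_def by (simp add: mm_sum_left sum.swap[of _ S])

lemma mconv_assoc: "mconv (mconv A B) C = mconv A (mconv B C)"
proof
  fix k
  have "mconv (mconv A B) C k =
    (\<Sum>p\<in>{(j, c). j + c = k}. \<Sum>r\<in>{(a, b). a + b = fst p}. A (fst r) ** B (snd r) ** C (snd p))"
    unfolding mconv_def by (simp add: mm_sum_left)
  also have "\<dots> = (\<Sum>(p,r)\<in>Sigma {(j, c). j + c = k} (\<lambda>p. {(a, b). a + b = fst p}).
      A (fst r) ** B (snd r) ** C (snd p))"
    by (rule sum.Sigma) (auto intro: finite_P)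
  also have "\<dots> = (\<Sum>(p,r)\<in>Sigma {(a, j). a + j = k} (\<lambda>p. {(b, c). b + c = snd p}).
      A (fst p) ** (B (fst r) ** C (snd r)))"
    by (rule sum.reindex_bij_witness[where i="\<lambda>((a,j),(b,c)). ((a+b,c),(a,b))"
          and j="\<lambda>((j,c),(a,b)). ((a,b+c),(b,c))"])
       (auto simp: matrix_mul_assoc add.assoc)
  also have "\<dots> = (\<Sum>p\<in>{(a, j). a + j = k}. \<Sum>r\<in>{(b, c). b + c = snd p}. A (fst p) ** (B (fst r) ** C (snd r)))"
    by (rule sum.Sigma[symmetric]) (auto intro: finite_P)
  also have "\<dots> = mconv A (mconv B C) k"
    unfolding mconv_def by (simp add: mm_sum_right)
  finally show "mconv (mconv A B) C k = mconv A (mconv B C) k" .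
qed

definition nrm :: "nat^'d \<Rightarrow> nat" where "nrm k = (\<Sum>i\<in>UNIV. k $ i)"

lemma nrm_add: "nrm (a + b) = nrm a + nrm b"
  unfolding nrm_def by (simp add: sum.distrib)

lemma nrm_pos: "a \<noteq> 0 \<Longrightarrow> nrm a > 0"
proof -
  assume "a \<noteq> 0"
  then obtain i where "a $ i \<noteq> 0" by (auto simp: vec_eq_iff)
  then have "0 < a $ i" by simp
  also have "a $ i \<le> nrm a" unfolding nrm_def
    by (rule member_le_sum) auto
  finally show ?thesis .
qed

lemma mpow_vanish:
  assumes "q 0 = 0"
  shows "nrm k < n \<Longrightarrow> mpow q n k = 0"
proof (induction n arbitrary: k)
  case 0 then show ?case by simp
next
  case (Suc n)
  have "mpow q (Suc n) k = (\<Sum>p\<in>{(l, l'). l + l' = k}. q (fst p) ** mpow q n (snd p))"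
    by (simp add: mconv_def)
  also have "\<dots> = 0"
  proof (rule sum.neutral, rule ballI)
    fix p assume "p \<in> {(l, l'). l + l' = k}"
    then obtain a b where pab: "p = (a, b)" and ab: "a + b = k" by auto
    show "q (fst p) ** mpow q n (snd p) = 0"
    proof (cases "a = 0")
      case True then show ?thesis using assms pab by simp
    next
      case False
      then have "nrm b < n" using nrm_pos[of a] nrm_add[of a b] ab Suc.prems by simp
      then show ?thesis using Suc.IH pab by simp
    qed
  qed
  finally show ?case .
qed

lemma mpow_comm: "mconv (mpow q n) q = mpow q (Suc n)"
proof (induction n)
  case 0 then show ?case by (simp add: mconv_mid_left mconv_mid_right)
next
  case (Suc n)
  then show ?case by (simp add: mconv_assoc)
qed

theorem proposition7:
  fixes M :: "'a measure" and J :: "nat \<Rightarrow> 'a \<Rightarrow> 's::finite"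
    and S :: "nat \<Rightarrow> 'a \<Rightarrow> nat ^ 'd" and q :: "nat ^ 'd \<Rightarrow> real ^ 's ^ 's"
  assumes "mtmrc M J S q"
    and "q 0 = 0"
  shows "\<exists>u. (\<forall>k. \<exists>N. \<forall>n\<ge>N. mpow q n k = 0)
           \<and> (\<forall>k. (\<lambda>n. mpow q n k) sums u k)
           \<and> mconv (\<lambda>k. mid k - q k) u = mid
           \<and> mconv u (\<lambda>k. mid k - q k) = mid"
proof -
  note van = mpow_vanish[of q, OF assms(2)]
  define u where "u k = (\<Sum>n<Suc (nrm k). mpow q n k)" for k
  have uN: "u k = (\<Sum>n<N. mpow q n k)" if "nrm k < N" for k N
  proof -
    have "(\<Sum>n<N. mpow q n k) = (\<Sum>n<Suc (nrm k). mpow q n k)"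
      by (rule sum.mono_neutral_right) (use that van in auto)
    then show ?thesis by (simp add: u_def)
  qed
  have P1: "\<forall>k. \<exists>N. \<forall>n\<ge>N. mpow q n k = 0"
  proof
    fix k
    show "\<exists>N. \<forall>n\<ge>N. mpow q n k = 0"
      by (rule exI[of _ "Suc (nrm k)"]) (auto intro: van)
  qed
  have P2: "(\<lambda>n. mpow q n k) sums u k" for k
  proof -
    have "(\<lambda>n. mpow q n k) sums (\<Sum>n\<in>{..<Suc (nrm k)}. mpow q n k)"
      by (rule sums_finite) (use van in auto)
    then show ?thesis by (simp add: u_def)
  qed
  have loc: "nrm (snd p) < Suc (nrm k)" if pk: "p \<in> {(l, l'). l + l' = k}" for p k
  proof -
    obtain a b where "p = (a, b)" "a + b = k" using pk by auto
    then show ?thesis using nrm_add[of a b] by simp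
  qed
  have loc2: "nrm (fst p) < Suc (nrm k)" if pk: "p \<in> {(l, l'). l + l' = k}" for p k
  proof -
    obtain a b where "p = (a, b)" "a + b = k" using pk by auto
    then show ?thesis using nrm_add[of a b] by simp
  qed
  have C1: "mconv q u k = u k - mid k" for k
  proof -
    let ?N = "Suc (nrm k)"
    have "mconv q u k = mconv q (\<lambda>l. \<Sum>n<?N. mpow q n l) k"
      unfolding mconv_def
    proof (rule sum.cong[OF refl])
      fix p assume "p \<in> {(l, l'). l + l' = k}"
      then have "u (snd p) = (\<Sum>n<?N. mpow q n (snd p))" by (rule uN[OF loc])
      then show "q (fst p) ** u (snd p) = q (fst p) ** (\<lambda>l. \<Sum>n<?N. mpow q n l) (snd p)" by simp
    qed
    also have "\<dots> = (\<Sum>n<?N. mpow q (Suc n) k)" by (simp only: mconv_sum_right mpow.simps)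
    also have "\<dots> = (\<Sum>n<Suc ?N. mpow q n k) - mid k"
      unfolding sum.lessThan_Suc_shift[where n="Suc (nrm k)"] by (simp add: mpow.simps(1) del: sum.lessThan_Suc mpow.simps(2))
    also have "\<dots> = u k - mid k" using uN[of k "Suc ?N"] by simp
    finally show ?thesis .
  qed
  have C2: "mconv u q k = u k - mid k" for k
  proof -
    let ?N = "Suc (nrm k)"
    have "mconv u q k = mconv (\<lambda>l. \<Sum>n<?N. mpow q n l) q k"
      unfolding mconv_def
    proof (rule sum.cong[OF refl])
      fix p assume "p \<in> {(l, l'). l + l' = k}"
      then have "u (fst p) = (\<Sum>n<?N. mpow q n (fst p))" by (rule uN[OF loc2])
      then show "u (fst p) ** q (snd p) = (\<lambda>l. \<Sum>n<?N. mpow q n l) (fst p) ** q (snd p)" by simp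
    qed
    also have "\<dots> = (\<Sum>n<?N. mpow q (Suc n) k)" by (simp only: mconv_sum_left mpow_comm)
    also have "\<dots> = (\<Sum>n<Suc ?N. mpow q n k) - mid k"
      unfolding sum.lessThan_Suc_shift[where n="Suc (nrm k)"] by (simp add: mpow.simps(1) del: sum.lessThan_Suc mpow.simps(2))
    also have "\<dots> = u k - mid k" using uN[of k "Suc ?N"] by simp
    finally show ?thesis .
  qed
  have P3: "mconv (\<lambda>k. mid k - q k) u = mid"
    by (rule ext) (simp add: mconv_diff_left mconv_mid_left C1)
  have P4: "mconv u (\<lambda>k. mid k - q k) = mid"
    by (rule ext) (simp add: mconv_diff_right mconv_mid_right C2)
  show ?thesis using P1 P2 P3 P4 by blast
qed

end
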